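(* Consider the multiset combinatorial auction model described in the context and an iterative auction that first asks demand queries and then value queries, with truthful bidders, whose allocation after any set of reports is a solution of the winner determination problem (WDP) on the inferred values. Let $a^{DQ}$ be the WDP allocation computed from the reports after the last demand query. Suppose the first value-query round is the bridge bid, i.e., each bidder $i$ is asked a value query for the bundle $a^{DQ}_i$. Then, after the bridge bid and after any subsequent value queries, the efficiency of the WDP allocation is at least the efficiency of $a^{DQ}$, the efficiency achieved by the demand queries alone.
   Context: Multiset combinatorial auction: bidders $N=\{1,\dots,n\}$, items $M=\{1,\dots,m\}$ with capacities $c\in\mathbb{N}^m$. Bundles are $x\in\mathcal{X}=\{0,\dots,c_1\}\times\cdots\times\{0,\dots,c_m\}$. Each bidder $i$ has a value function $v_i:\mathcal{X}\to\mathbb{R}_{\ge0}$. Feasible allocations: $\mathcal{F}=\{a\in\mathcal{X}^n:\sum_i a_{ij}\le c_j\ \forall j\}$. Social welfare $V(a)=\sum_i v_i(a_i)$; efficiency of $a$ is $V(a)/\max_{a'\in\mathcal{F}}V(a')$. A demand query at prices $p\in\mathbb{R}^m_{\ge0}$ is answered truthfully by bidder $i$ with some $x_i^*(p)\in\arg\max_{x\in\mathcal{X}}\{v_i(x)-\langle p,x\rangle\}$; a value query for $x$ is answered with $v_i(x)$. With reports $R_i$ consisting of demand responses $R_i^{DQ}$ (pairs $(x,p)$) and value responses $R_i^{VQ}$ (pairs $(x,v_i(x))$), the inferred value is $\tilde v_i(x;R_i)=v_i(x)$ if $x$ appears in $R_i^{VQ}$ and otherwise $\max(\{\langle x,p\rangle:(x,p)\in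 R_i^{DQ}\}\cup\{0\})$. The WDP allocation is $a^*(R)\in\arg\max_{a\in\mathcal{F}}\sum_i\tilde v_i(a_i;R_i)$. *)

theory Defs
  imports Complex_Main
begin

text \<open>Items are the elements of a finite type 'm, bidders the elements of a finite type 'n.
 A bundle is a function 'm => nat, a price vector a function 'm => real.\<close>

definition bundles :: "('m::finite \<Rightarrow> nat) \<Rightarrow> ('m \<Rightarrow> nat) set" where
  "bundles c = {x. \<forall>j. x j \<le> c j}"

definition pdot :: "('m::finite \<Rightarrow> real) \<Rightarrow> ('m \<Rightarrow> nat) \<Rightarrow> real" where
  "pdot p x = (\<Sum>j\<in>UNIV. p j * real (x j))"

definition feasible :: "('m::finite \<Rightarrow> nat) \<Rightarrow> ('n::finite \<Rightarrow> 'm \<Rightarrow> nat) set" where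
  "feasible c = {a. (\<forall>i. a i \<in> bundles c) \<and> (\<forall>j. (\<Sum>i\<in>UNIV. a i j) \<le> c j)}"

definition welfare :: "('n::finite \<Rightarrow> ('m \<Rightarrow> nat) \<Rightarrow> real) \<Rightarrow> ('n \<Rightarrow> 'm \<Rightarrow> nat) \<Rightarrow> real" where
  "welfare v a = (\<Sum>i\<in>UNIV. v i (a i))"

definition opt_welfare :: "('m::finite \<Rightarrow> nat) \<Rightarrow> ('n::finite \<Rightarrow> ('m \<Rightarrow> nat) \<Rightarrow> real) \<Rightarrow> real" where
  "opt_welfare c v = Max (welfare v ` feasible c)"

definition efficiency :: "('m::finite \<Rightarrow> nat) \<Rightarrow> ('n::finite \<Rightarrow> ('m \<Rightarrow> nat) \<Rightarrow> real)
    \<Rightarrow> ('n \<Rightarrow> 'm \<Rightarrow> nat) \<Rightarrow> real" where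
  "efficiency c v a = welfare v a / opt_welfare c v"

definition truthful_dq :: "('m::finite \<Rightarrow> nat) \<Rightarrow> (('m \<Rightarrow> nat) \<Rightarrow> real) \<Rightarrow> ('m \<Rightarrow> nat) \<Rightarrow> ('m \<Rightarrow> real) \<Rightarrow> bool" where
  "truthful_dq c vi x p \<longleftrightarrow> (\<forall>j. p j \<ge> 0) \<and> x \<in> bundles c \<and>
     (\<forall>y\<in>bundles c. vi y - pdot p y \<le> vi x - pdot p x)"

text \<open>Inferred value from demand reports DQ (pairs (x,p)) and the set VQ of bundles
 for which a (truthful) value query has been answered.\<close>
definition inferred_value ::
  "(('m::finite \<Rightarrow> nat) \<Rightarrow> real) \<Rightarrow> (('m \<Rightarrow> nat) \<times> ('m \<Rightarrow> real)) set \<Rightarrow> ('m \<Rightarrow> nat) set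
    \<Rightarrow> ('m \<Rightarrow> nat) \<Rightarrow> real" where
  "inferred_value vi DQ VQ x =
     (if x \<in> VQ then vi x else Max ({pdot p x | p. (x, p) \<in> DQ} \<union> {0}))"

definition wdp_solution ::
  "('m::finite \<Rightarrow> nat) \<Rightarrow> ('n::finite \<Rightarrow> ('m \<Rightarrow> nat) \<Rightarrow> real)
    \<Rightarrow> ('n \<Rightarrow> (('m \<Rightarrow> nat) \<times> ('m \<Rightarrow> real)) set) \<Rightarrow> ('n \<Rightarrow> ('m \<Rightarrow> nat) set)
    \<Rightarrow> ('n \<Rightarrow> 'm \<Rightarrow> nat) \<Rightarrow> bool" where
  "wdp_solution c v DQ VQ a \<longleftrightarrow> a \<in> feasible c \<and>
     (\<forall>b\<in>feasible c. (\<Sum>i\<in>UNIV. inferred_value (v i) (DQ i) (VQ i) (b i))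
                   \<le> (\<Sum>i\<in>UNIV. inferred_value (v i) (DQ i) (VQ i) (a i)))"

end

theory Submission
  imports Defs "HOL-Library.FuncSet"
begin

lemma pdot_zero: "pdot p (\<lambda>_. 0) = 0"
  by (simp add: pdot_def)

lemma zero_bundle: "(\<lambda>_. 0) \<in> bundles c"
  by (simp add: bundles_def)

lemma finite_bundles: "finite (bundles (c::'m::finite \<Rightarrow> nat))"
proof -
  have "bundles c \<subseteq> PiE UNIV (\<lambda>j. {..c j})"
    by (auto simp: bundles_def PiE_def Pi_def extensional_def)
  moreover have "finite (PiE (UNIV::'m set) (\<lambda>j. {..c j}))"
    by (rule finite_PiE) auto
  ultimately show ?thesis by (rule finite_subset)
qed

lemma finite_feasible: "finite (feasible (c::'m::finite \<Rightarrow> nat) :: ('n::finite \<Rightarrow> 'm \<Rightarrow> nat) set)"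
proof -
  have "(feasible c :: ('n \<Rightarrow> 'm \<Rightarrow> nat) set) \<subseteq> PiE UNIV (\<lambda>i. bundles c)"
    by (auto simp: feasible_def PiE_def Pi_def extensional_def)
  moreover have "finite (PiE (UNIV::'n set) (\<lambda>i. bundles c))"
    by (rule finite_PiE) (auto simp: finite_bundles)
  ultimately show ?thesis by (rule finite_subset)
qed

theorem lemmaD9:
  fixes c :: "'m::finite \<Rightarrow> nat"
    and v :: "'n::finite \<Rightarrow> ('m \<Rightarrow> nat) \<Rightarrow> real"
    and DQ :: "'n \<Rightarrow> (('m \<Rightarrow> nat) \<times> ('m \<Rightarrow> real)) set"
    and aDQ :: "'n \<Rightarrow> 'm \<Rightarrow> nat"
    and S :: "'n \<Rightarrow> ('m \<Rightarrow> nat) set"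
    and a :: "'n \<Rightarrow> 'm \<Rightarrow> nat"
  assumes v_nonneg: "\<And>i x. x \<in> bundles c \<Longrightarrow> v i x \<ge> 0"
    and DQ_finite: "\<And>i. finite (DQ i)"
    and DQ_truthful: "\<And>i x p. (x, p) \<in> DQ i \<Longrightarrow> truthful_dq c (v i) x p"
    and aDQ_wdp: "wdp_solution c v DQ (\<lambda>i. {}) aDQ"
    and a_wdp: "wdp_solution c v DQ (\<lambda>i. insert (aDQ i) (S i)) a"
  shows "efficiency c v a \<ge> efficiency c v aDQ"
proof -
  let ?VQ = "\<lambda>i. insert (aDQ i) (S i)"
  have pd: "pdot p x \<le> v i x" if "(x, p) \<in> DQ i" for i x p
  proof -
    have t: "truthful_dq c (v i) x p" using DQ_truthful that .
    hence "v i (\<lambda>_. 0) - pdot p (\<lambda>_. 0) \<le> v i x - pdot p x"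
      unfolding truthful_dq_def using zero_bundle by blast
    moreover have "v i (\<lambda>_. 0) \<ge> 0" using v_nonneg zero_bundle by blast
    ultimately show ?thesis by (simp add: pdot_zero)
  qed
  have le: "inferred_value (v i) (DQ i) (?VQ i) x \<le> v i x" if "x \<in> bundles c" for i x
  proof (cases "x \<in> ?VQ i")
    case True then show ?thesis by (simp add: inferred_value_def)
  next
    case False
    have fin: "finite ({pdot p x | p. (x, p) \<in> DQ i} \<union> {0})"
    proof -
      have "{pdot p x | p. (x, p) \<in> DQ i} \<subseteq> (\<lambda>q. pdot (snd q) x) ` DQ i" by force
      then show ?thesis using DQ_finite finite_subset by blast
    qed
    have "Max ({pdot p x | p. (x, p) \<in> DQ i} \<union> {0}) \<le> v i x"
      using fin by (subst Max_le_iff) (auto intro: pd v_nonneg[OF that])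
    then show ?thesis using False by (simp add: inferred_value_def)
  qed
  have aF: "a \<in> feasible c" and aDF: "aDQ \<in> feasible c"
    using a_wdp aDQ_wdp by (auto simp: wdp_solution_def)
  have eq: "inferred_value (v i) (DQ i) (?VQ i) (aDQ i) = v i (aDQ i)" for i
    by (simp add: inferred_value_def)
  have "welfare v aDQ = (\<Sum>i\<in>UNIV. inferred_value (v i) (DQ i) (?VQ i) (aDQ i))"
    by (simp add: welfare_def eq)
  also have "\<dots> \<le> (\<Sum>i\<in>UNIV. inferred_value (v i) (DQ i) (?VQ i) (a i))"
    using a_wdp aDF unfolding wdp_solution_def by blast
  also have "\<dots> \<le> welfare v a"
    unfolding welfare_def
    by (rule sum_mono, rule le) (use aF in \<open>auto simp: feasible_def\<close>)
  finally have W: "welfare v aDQ \<le> welfare v a" .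
  have "welfare v (\<lambda>_ _. 0) \<ge> 0"
    unfolding welfare_def by (rule sum_nonneg) (auto intro: v_nonneg simp: bundles_def)
  moreover have "(\<lambda>_ _. 0) \<in> (feasible c :: ('n \<Rightarrow> 'm \<Rightarrow> nat) set)"
    by (simp add: feasible_def bundles_def)
  ultimately have "opt_welfare c v \<ge> 0"
    unfolding opt_welfare_def using finite_feasible
    by (meson Max_ge finite_imageI image_eqI order_trans)
  then show ?thesis unfolding efficiency_def using W by (simp add: divide_right_mono)
qed

end
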